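(* Let $n\ge 2$. For every $T_1,T_2\in\mathcal{T}_n$, $\mathit{TD}'(T_1,T_2)$ is an even integer smaller than $2n-2$.
   Context: A phylogenetic tree is a finite rooted tree (arcs directed away from the root) with no node of outdegree $1$, whose leaves are injectively labeled. $\mathcal{T}_n$ denotes the set of phylogenetic trees with $n$ leaves labeled $1,\dots,n$, up to label-preserving isomorphism. Internal nodes are the non-leaf nodes; $\mathcal{L}(T)$ is the set of leaves. The height of a node is the length of a longest directed path from it to a leaf. The bottom-up ordering of $T=(V,E)\in\mathcal{T}_n$ is the unique injective map $\ell:V\to\{1,\dots,|V|\}$ such that: (a) for a leaf $v$, $\ell(v)$ is its label; (b) if $\mathrm{height}(u)<\mathrm{height}(v)$ then $\ell(u)<\ell(v)$; (c) if $0<\mathrm{height}(u)=\mathrm{height}(v)$ and $\min\{\ell(x): x \text{ child of } u\}<\min\{\ell(x): x\text{ child of } v\}$ then $\ell(u)<\ell(v)$. For a subset $S=\{i_1<\dots<i_k\}$ with $k\ge 2$, $\kappa(S)$ is the cyclic permutation $(i_1,i_2,\dots,i_k)$. The matching permutation of $T$ is $\pi(T)=\prod_{u\in V\setminus\mathcal{L}(T)}\kappa(\ell(\mathrm{children}(u)))$, regarded as an element of $\mathfrak{S}_{2n-2}$ fixing $|V|,\dots,2n-2$. Permutations are composed right to left. $\mathit{TD}'(T_1,T_2)$ is the least number of transpositions whose product is $\pi(T_2)^{-1}\pi(T_1)$ (zero if this is the identity). *)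

theory Defs
  imports Main "HOL-Combinatorics.Cycles"
begin

text \<open>A rooted tree is given by a finite vertex set V, an arc relation E (arcs
  directed away from the root) and a leaf labelling lab.\<close>

definition children :: "('a \<times> 'a) set \<Rightarrow> 'a \<Rightarrow> 'a set" where
  "children E u = {w. (u, w) \<in> E}"

definition leaves :: "'a set \<Rightarrow> ('a \<times> 'a) set \<Rightarrow> 'a set" where
  "leaves V E = {v \<in> V. children E v = {}}"

definition phylo_tree :: "nat \<Rightarrow> 'a set \<Rightarrow> ('a \<times> 'a) set \<Rightarrow> ('a \<Rightarrow> nat) \<Rightarrow> bool" where
  "phylo_tree n V E lab \<longleftrightarrow>
     finite V \<and> E \<subseteq> V \<times> V \<and>
     (\<exists>r\<in>V. (\<forall>v. (v, r) \<notin> E) \<and> (\<forall>v\<in>V - {r}. \<exists>!u. (u, v) \<in> E) \<and> (\<forall>v\<in>V. (r, v) \<in> E\<^sup>*)) \<and>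
     (\<forall>v\<in>V. card (children E v) \<noteq> 1) \<and>
     bij_betw lab (leaves V E) {1..n}"

definition height :: "('a \<times> 'a) set \<Rightarrow> 'a \<Rightarrow> nat" where
  "height E v = Max {k. \<exists>w. (v, w) \<in> E ^^ k}"

definition is_bottom_up :: "'a set \<Rightarrow> ('a \<times> 'a) set \<Rightarrow> ('a \<Rightarrow> nat) \<Rightarrow> ('a \<Rightarrow> nat) \<Rightarrow> bool" where
  "is_bottom_up V E lab lo \<longleftrightarrow>
     inj_on lo V \<and> lo ` V \<subseteq> {1..card V} \<and> (\<forall>v. v \<notin> V \<longrightarrow> lo v = 0) \<and>
     (\<forall>v\<in>leaves V E. lo v = lab v) \<and>
     (\<forall>u\<in>V. \<forall>v\<in>V. height E u < height E v \<longrightarrow> lo u < lo v) \<and>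
     (\<forall>u\<in>V. \<forall>v\<in>V. 0 < height E u \<and> height E u = height E v \<and>
        Min (lo ` children E u) < Min (lo ` children E v) \<longrightarrow> lo u < lo v)"

definition bottom_up :: "'a set \<Rightarrow> ('a \<times> 'a) set \<Rightarrow> ('a \<Rightarrow> nat) \<Rightarrow> 'a \<Rightarrow> nat" where
  "bottom_up V E lab = (THE lo. is_bottom_up V E lab lo)"

definition kappa :: "nat set \<Rightarrow> nat \<Rightarrow> nat" where
  "kappa S = cycle_of_list (sorted_list_of_set S)"

text \<open>Matching permutation: product (composition, right to left) of the cycles
  kappa(l(children u)) over all internal nodes u (taken in order of their labels;
  the cycles are disjoint, so the order is immaterial).\<close>
definition match_perm :: "'a set \<Rightarrow> ('a \<times> 'a) set \<Rightarrow> ('a \<Rightarrow> nat) \<Rightarrow> nat \<Rightarrow> nat" where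
  "match_perm V E lab =
     (let lo = bottom_up V E lab
      in foldr (\<lambda>k f. kappa (lo ` children E (inv_into V lo k)) \<circ> f)
           (sorted_list_of_set (lo ` (V - leaves V E))) id)"

definition trans_dist :: "nat \<Rightarrow> (nat \<Rightarrow> nat) \<Rightarrow> nat" where
  "trans_dist n p = (LEAST k. \<exists>ts :: (nat \<times> nat) list. length ts = k \<and>
      (\<forall>(a, b) \<in> set ts. a \<noteq> b \<and> a \<in> {1..2*n-2} \<and> b \<in> {1..2*n-2}) \<and>
      foldr (\<lambda>(a, b) f. transpose a b \<circ> f) ts id = p)"

definition TD' :: "nat \<Rightarrow> 'a set \<times> ('a \<times> 'a) set \<times> ('a \<Rightarrow> nat) \<Rightarrow>
    'b set \<times> ('b \<times> 'b) set \<times> ('b \<Rightarrow> nat) \<Rightarrow> nat" where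
  "TD' n T1 T2 = (case T1 of (V1, E1, lab1) \<Rightarrow> case T2 of (V2, E2, lab2) \<Rightarrow>
      trans_dist n (inv (match_perm V2 E2 lab2) \<circ> match_perm V1 E1 lab1))"

end

theory Submission
  imports Defs
begin

lemma path_unique_root:
  assumes root: "\<forall>v. (v, r) \<notin> E" and par: "\<forall>v\<in>V - {r}. \<exists>!u. (u, v) \<in> E"
    and EV: "E \<subseteq> V \<times> V"
  shows "(r, v) \<in> E ^^ k \<Longrightarrow> (r, v) \<in> E ^^ j \<Longrightarrow> k = j"
proof (induction k arbitrary: v j)
  case 0
  then have "v = r" by simp
  show ?case
  proof (cases j)
    case (Suc j')
    with 0 \<open>v = r\<close> root show ?thesis by auto
  qed simp
next
  case (Suc k)
  from Suc.prems(1) obtain y where y: "(r, y) \<in> E ^^ k" "(y, v) \<in> E" by auto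
  with root have vr: "v \<noteq> r" by auto
  from y EV have vV: "v \<in> V" by auto
  show ?case
  proof (cases j)
    case 0
    with Suc.prems(2) vr show ?thesis by simp
  next
    case (Suc j')
    with Suc.prems(2) obtain y' where y': "(r, y') \<in> E ^^ j'" "(y', v) \<in> E" by auto
    from par vV vr y(2) y'(2) have "y = y'" by auto
    with Suc.IH[OF y(1)] y'(1) Suc show ?thesis by simp
  qed
qed

locale ptree =
  fixes n :: nat and V :: "'a set" and E :: "('a \<times> 'a) set" and lab :: "'a \<Rightarrow> nat"
  assumes pt: "phylo_tree n V E lab"
begin

lemma finV: "finite V" and EV: "E \<subseteq> V \<times> V" and card_ch: "\<forall>v\<in>V. card (children E v) \<noteq> 1"
  and labbij: "bij_betw lab (leaves V E) {1..n}"
  using pt unfolding phylo_tree_def by auto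

definition root where "root = (SOME r. r \<in> V \<and> (\<forall>v. (v, r) \<notin> E) \<and> (\<forall>v\<in>V - {r}. \<exists>!u. (u, v) \<in> E) \<and> (\<forall>v\<in>V. (r, v) \<in> E\<^sup>*))"

lemma root_props: "root \<in> V" "\<forall>v. (v, root) \<notin> E" "\<forall>v\<in>V - {root}. \<exists>!u. (u, v) \<in> E" "\<forall>v\<in>V. (root, v) \<in> E\<^sup>*"
proof -
  from pt obtain r where "r \<in> V \<and> (\<forall>v. (v, r) \<notin> E) \<and> (\<forall>v\<in>V - {r}. \<exists>!u. (u, v) \<in> E) \<and> (\<forall>v\<in>V. (r, v) \<in> E\<^sup>*)"
    unfolding phylo_tree_def by blast
  then have "root \<in> V \<and> (\<forall>v. (v, root) \<notin> E) \<and> (\<forall>v\<in>V - {root}. \<exists>!u. (u, v) \<in> E) \<and> (\<forall>v\<in>V. (root, v) \<in> E\<^sup>*)"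
    unfolding root_def by (rule someI)
  then show "root \<in> V" "\<forall>v. (v, root) \<notin> E" "\<forall>v\<in>V - {root}. \<exists>!u. (u, v) \<in> E" "\<forall>v\<in>V. (root, v) \<in> E\<^sup>*"
    by auto
qed

lemma path_unique: "(root, v) \<in> E ^^ k \<Longrightarrow> (root, v) \<in> E ^^ j \<Longrightarrow> k = j"
  using path_unique_root[OF root_props(2) root_props(3) EV] by blast

definition dep where "dep v = (SOME k. (root, v) \<in> E ^^ k)"

lemma dep: "v \<in> V \<Longrightarrow> (root, v) \<in> E ^^ dep v"
  unfolding dep_def using root_props(4) by (metis rtrancl_power someI)

lemma relpow_in_V: "u \<in> V \<Longrightarrow> (u, w) \<in> E ^^ k \<Longrightarrow> w \<in> V"
  using EV by (cases k) auto

lemma dep_path: "u \<in> V \<Longrightarrow> (u, w) \<in> E ^^ k \<Longrightarrow> dep w = dep u + k"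
proof -
  assume u: "u \<in> V" and p: "(u, w) \<in> E ^^ k"
  have "(root, w) \<in> E ^^ (dep u + k)" using dep[OF u] p by (auto simp: relpow_add)
  moreover have "(root, w) \<in> E ^^ dep w" using dep relpow_in_V[OF u p] by blast
  ultimately show ?thesis using path_unique by metis
qed

definition Ks where "Ks v = {k. \<exists>w. (v, w) \<in> E ^^ k}"

lemma fin_Ks: "v \<in> V \<Longrightarrow> finite (Ks v)"
proof -
  assume v: "v \<in> V"
  have "Ks v \<subseteq> {..Max (dep ` V)}"
  proof
    fix k assume "k \<in> Ks v"
    then obtain w where w: "(v, w) \<in> E ^^ k" unfolding Ks_def by auto
    have "dep w \<le> Max (dep ` V)" using relpow_in_V[OF v w] finV by auto
    then show "k \<in> {..Max (dep ` V)}" using dep_path[OF v w] by auto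
  qed
  then show ?thesis using finite_subset by blast
qed

lemma height_Ks: "height E v = Max (Ks v)"
  unfolding height_def Ks_def by simp

lemma height_path: "v \<in> V \<Longrightarrow> \<exists>w. (v, w) \<in> E ^^ height E v"
proof -
  assume v: "v \<in> V"
  have "0 \<in> Ks v" unfolding Ks_def by auto
  then have "Max (Ks v) \<in> Ks v" using fin_Ks[OF v] by (intro Max_in) auto
  then show ?thesis unfolding height_Ks Ks_def by simp
qed

lemma height_ge: "v \<in> V \<Longrightarrow> (v, w) \<in> E ^^ k \<Longrightarrow> k \<le> height E v"
  unfolding height_Ks using fin_Ks by (auto simp: Ks_def intro!: Max_ge)

lemma height_child: "(u, c) \<in> E \<Longrightarrow> height E c < height E u"
proof -
  assume e: "(u, c) \<in> E"
  then have uV: "u \<in> V" and cV: "c \<in> V" using EV by auto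
  obtain w where w: "(c, w) \<in> E ^^ height E c" using height_path[OF cV] by blast
  have "(u, w) \<in> E ^^ Suc (height E c)" using relpow_Suc_I2[OF e w] .
  from height_ge[OF uV this] show ?thesis by simp
qed

lemma height0_iff: "v \<in> V \<Longrightarrow> (height E v = 0) = (v \<in> leaves V E)"
proof -
  assume v: "v \<in> V"
  show ?thesis
  proof
    assume h: "height E v = 0"
    show "v \<in> leaves V E"
    proof (rule ccontr)
      assume "v \<notin> leaves V E"
      then obtain c where "(v, c) \<in> E" using v unfolding leaves_def children_def by auto
      from height_child[OF this] h show False by simp
    qed
  next
    assume l: "v \<in> leaves V E"
    obtain w where w: "(v, w) \<in> E ^^ height E v" using height_path[OF v] by blast
    show "height E v = 0"
    proof (cases "height E v")
      case (Suc m)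
      with w obtain y where "(v, y) \<in> E" by (metis relpow_Suc_D2)
      with l show ?thesis unfolding leaves_def children_def by auto
    qed simp
  qed
qed

lemma height_root: "v \<in> V \<Longrightarrow> v \<noteq> root \<Longrightarrow> height E v < height E root"
proof -
  assume v: "v \<in> V" and vr: "v \<noteq> root"
  obtain k where k: "(root, v) \<in> E ^^ k" using root_props(4) v by (metis rtrancl_power)
  with vr have k0: "k \<noteq> 0" by (cases k) auto
  obtain w where w: "(v, w) \<in> E ^^ height E v" using height_path[OF v] by blast
  have "(root, w) \<in> E ^^ (k + height E v)" using k w by (auto simp: relpow_add)
  from height_ge[OF root_props(1) this] k0 show ?thesis by simp
qed

lemma ch_sub: "children E v \<subseteq> V - {root}"
  using EV root_props(2) unfolding children_def by auto

lemma ch_fin: "finite (children E v)"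
  using ch_sub finV finite_subset by blast

lemma ch_disj: "u \<noteq> u' \<Longrightarrow> children E u \<inter> children E u' = {}"
  using root_props(3) ch_sub unfolding children_def by blast

lemma ch_internal: "v \<in> V - leaves V E \<Longrightarrow> card (children E v) \<ge> 2"
proof -
  assume v: "v \<in> V - leaves V E"
  then have "children E v \<noteq> {}" unfolding leaves_def by auto
  then have "card (children E v) \<noteq> 0" using ch_fin by auto
  moreover have "card (children E v) \<noteq> 1" using card_ch v by auto
  ultimately show ?thesis by linarith
qed

lemma ch_union: "(\<Union>u\<in>V. children E u) = V - {root}"
proof
  show "(\<Union>u\<in>V. children E u) \<subseteq> V - {root}" using ch_sub by auto
  show "V - {root} \<subseteq> (\<Union>u\<in>V. children E u)"
  proof
    fix v assume v: "v \<in> V - {root}"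
    then obtain u where "(u, v) \<in> E" using root_props(3) by blast
    then show "v \<in> (\<Union>u\<in>V. children E u)" using EV unfolding children_def by auto
  qed
qed

lemma card_leaves: "card (leaves V E) = n"
  using bij_betw_same_card[OF labbij] by simp

lemma sum_ch_V: "(\<Sum>u\<in>V. card (children E u)) = card V - 1"
proof -
  have "card (\<Union>u\<in>V. children E u) = (\<Sum>u\<in>V. card (children E u))"
    using finV ch_fin ch_disj by (intro card_UN_disjoint) auto
  then show ?thesis using ch_union root_props(1) finV by simp
qed

lemma sum_ch_I: "(\<Sum>u\<in>V - leaves V E. card (children E u)) = card V - 1"
proof -
  have "(\<Sum>u\<in>V. card (children E u)) = (\<Sum>u\<in>V - leaves V E. card (children E u)) + (\<Sum>u\<in>leaves V E. card (children E u))"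
    using finV by (metis (no_types, lifting) Diff_subset leaves_def mem_Collect_eq subsetI sum.subset_diff)
  moreover have "(\<Sum>u\<in>leaves V E. card (children E u)) = 0" unfolding leaves_def by simp
  ultimately show ?thesis using sum_ch_V by simp
qed

lemma card_I: "card (V - leaves V E) = card V - n"
  using card_leaves finV by (metis card_Diff_subset finite_subset leaves_def mem_Collect_eq subsetI)

lemma sum_I: "(\<Sum>u\<in>V - leaves V E. card (children E u) - 1) = n - 1"
  and card_V_bound: "card V + 1 \<le> 2 * n"
proof -
  let ?I = "V - leaves V E"
  have fI: "finite ?I" using finV by auto
  have a: "(\<Sum>u\<in>?I. card (children E u) - 1) + card ?I = (\<Sum>u\<in>?I. card (children E u))"
  proof -
    have "(\<Sum>u\<in>?I. card (children E u) - 1) + card ?I = (\<Sum>u\<in>?I. card (children E u) - 1 + 1)"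
      using sum.distrib[of "\<lambda>u. card (children E u) - 1" "\<lambda>_. 1" ?I] by simp
    also have "\<dots> = (\<Sum>u\<in>?I. card (children E u))"
    proof (intro sum.cong refl)
      fix x assume "x \<in> ?I"
      from ch_internal[OF this] show "card (children E x) - 1 + 1 = card (children E x)" by linarith
    qed
    finally show ?thesis .
  qed
  have b: "2 * card ?I \<le> (\<Sum>u\<in>?I. card (children E u))"
  proof -
    have "(\<Sum>u\<in>?I. 2) \<le> (\<Sum>u\<in>?I. card (children E u))"
      using ch_internal by (intro sum_mono) auto
    then show ?thesis by simp
  qed
  have ln: "n \<le> card V" using card_leaves finV
    by (metis card_mono leaves_def mem_Collect_eq subsetI)
  have V1: "card V \<ge> 1" using root_props(1) finV by (metis One_nat_def Suc_leI card_gt_0_iff empty_iff)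
  show "(\<Sum>u\<in>?I. card (children E u) - 1) = n - 1"
    using a sum_ch_I card_I ln V1 by linarith
  show "card V + 1 \<le> 2 * n"
    using b sum_ch_I card_I ln V1 by linarith
qed

end


lemma rank_lemma:
  assumes bij: "bij_betw f A {1..m}" and v: "v \<in> A"
  shows "1 \<le> f v \<and> card {u\<in>A. f u < f v} = f v - 1"
proof -
  have fv: "f v \<in> {1..m}" using bij v by (auto simp: bij_betw_def)
  have "f ` {u\<in>A. f u < f v} = {1..<f v}"
  proof
    show "f ` {u\<in>A. f u < f v} \<subseteq> {1..<f v}" using bij by (auto simp: bij_betw_def)
    show "{1..<f v} \<subseteq> f ` {u\<in>A. f u < f v}"
    proof
      fix x assume x: "x \<in> {1..<f v}"
      then have "x \<in> {1..m}" using fv by auto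
      then have "x \<in> f ` A" using bij by (simp add: bij_betw_def)
      then obtain u where "u \<in> A" "f u = x" by auto
      then show "x \<in> f ` {u\<in>A. f u < f v}" using x by auto
    qed
  qed
  moreover have "inj_on f {u\<in>A. f u < f v}" using bij by (auto simp: bij_betw_def intro: inj_on_subset)
  ultimately have "card {u\<in>A. f u < f v} = card {1..<f v}" by (metis card_image)
  then show ?thesis using fv by simp
qed

context ptree
begin

definition key :: "('a \<Rightarrow> nat) \<Rightarrow> 'a \<Rightarrow> nat" where
  "key f u = (if height E u = 0 then lab u else Min (f ` children E u))"

definition isRF :: "('a \<Rightarrow> nat) \<Rightarrow> bool" where
  "isRF f \<longleftrightarrow> (\<forall>v\<in>V. f v = 1 + card {u\<in>V. height E u < height E v}
      + card {u\<in>V. height E u = height E v \<and> key f u < key f v})"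

lemma rf_mono1:
  assumes f: "isRF f" and u: "u \<in> V" and v: "v \<in> V" and h: "height E u < height E v"
  shows "f u < f v"
proof -
  let ?A = "\<lambda>w. {x\<in>V. height E x < height E w}"
  let ?B = "\<lambda>w. {x\<in>V. height E x = height E w \<and> key f x < key f w}"
  have "card (?A u \<union> ?B u \<union> {u}) = card (?A u) + card (?B u) + 1"
    using finV by (subst card_Un_disjoint, auto intro: card_Un_disjoint)+
  moreover have "card (?A u \<union> ?B u \<union> {u}) \<le> card (?A v)"
    using finV h u by (intro card_mono) auto
  ultimately show ?thesis using f u v unfolding isRF_def by auto
qed

lemma rf_mono2:
  assumes f: "isRF f" and u: "u \<in> V" and v: "v \<in> V" and h: "height E u = height E v"
    and k: "key f u < key f v"
  shows "f u < f v"
proof -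
  let ?B = "\<lambda>w. {x\<in>V. height E x = height E w \<and> key f x < key f w}"
  have "card (?B u \<union> {u}) = card (?B u) + 1"
    using finV by (subst card_Un_disjoint) auto
  moreover have "card (?B u \<union> {u}) \<le> card (?B v)"
    using finV h u k by (intro card_mono) auto
  ultimately show ?thesis using f u v h unfolding isRF_def by auto
qed

lemma rf_range:
  assumes f: "isRF f" and v: "v \<in> V"
  shows "1 \<le> f v \<and> f v \<le> card V"
proof -
  let ?A = "\<lambda>w. {x\<in>V. height E x < height E w}"
  let ?B = "\<lambda>w. {x\<in>V. height E x = height E w \<and> key f x < key f w}"
  have "card (?A v \<union> ?B v \<union> {v}) = card (?A v) + card (?B v) + 1"
    using finV by (subst card_Un_disjoint, auto intro: card_Un_disjoint)+
  moreover have "card (?A v \<union> ?B v \<union> {v}) \<le> card V"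
    using finV v by (intro card_mono) auto
  ultimately show ?thesis using f v unfolding isRF_def by auto
qed

lemma key_common:
  assumes u: "u \<in> V" and v: "v \<in> V" and h: "height E u = height E v" and h0: "height E u \<noteq> 0"
    and k: "key f u = key f v"
  shows "\<exists>c\<in>children E u. \<exists>c'\<in>children E v. f c = f c'"
proof -
  have "u \<notin> leaves V E" "v \<notin> leaves V E" using height0_iff[OF u] height0_iff[OF v] h h0 by auto
  then have ne: "children E u \<noteq> {}" "children E v \<noteq> {}" using u v unfolding leaves_def by auto
  have "Min (f ` children E u) \<in> f ` children E u" using ne ch_fin by (intro Min_in) auto
  moreover have "Min (f ` children E v) \<in> f ` children E v" using ne ch_fin by (intro Min_in) auto
  moreover have "Min (f ` children E u) = Min (f ` children E v)" using k h h0 unfolding key_def by simp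
  ultimately show ?thesis by force
qed

lemma key_inj:
  assumes inj: "inj_on f V" and u: "u \<in> V" and v: "v \<in> V" and h: "height E u = height E v"
    and k: "key f u = key f v"
  shows "u = v"
proof (cases "height E u = 0")
  case True
  then have "u \<in> leaves V E" "v \<in> leaves V E" using height0_iff[OF u] height0_iff[OF v] h by auto
  moreover have "lab u = lab v" using k True h unfolding key_def by simp
  ultimately show ?thesis using labbij by (auto simp: bij_betw_def inj_on_def)
next
  case False
  then obtain c c' where c: "c \<in> children E u" "c' \<in> children E v" "f c = f c'"
    using key_common[OF u v h False k] by blast
  then have "c = c'" using inj ch_sub by (auto simp: inj_on_def)
  then show ?thesis using c ch_disj by blast
qed

lemma rf_inj:
  assumes f: "isRF f"
  shows "inj_on f V"
proof -
  have "\<forall>u v. u \<in> V \<longrightarrow> v \<in> V \<longrightarrow> height E u = h \<longrightarrow> f u = f v \<longrightarrow> u = v" for h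
  proof (induction h rule: less_induct)
    case (less h)
    show ?case
    proof (intro allI impI)
      fix u v assume u: "u \<in> V" and v: "v \<in> V" and hu: "height E u = h" and fe: "f u = f v"
      have hv: "height E u = height E v"
      proof -
        have "\<not> height E u < height E v" using rf_mono1[OF f u v] fe by auto
        moreover have "\<not> height E v < height E u" using rf_mono1[OF f v u] fe by auto
        ultimately show ?thesis by simp
      qed
      have k: "key f u = key f v"
      proof -
        have "\<not> key f u < key f v" using rf_mono2[OF f u v hv] fe by auto
        moreover have "\<not> key f v < key f u" using rf_mono2[OF f v u hv[symmetric]] fe by auto
        ultimately show ?thesis by simp
      qed
      show "u = v"
      proof (cases "h = 0")
        case True
        then have "u \<in> leaves V E" "v \<in> leaves V E" using height0_iff[OF u] height0_iff[OF v] hu hv by auto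
        moreover have "lab u = lab v" using k True hu hv unfolding key_def by simp
        ultimately show ?thesis using labbij by (auto simp: bij_betw_def inj_on_def)
      next
        case False
        then obtain c c' where c: "c \<in> children E u" "c' \<in> children E v" "f c = f c'"
          using key_common[OF u v hv _ k] hu by blast
        have cV: "c \<in> V" "c' \<in> V" using c ch_sub by auto
        have "height E c < h" using c(1) height_child hu unfolding children_def by auto
        then have "c = c'" using less.IH cV c(3) by blast
        then show ?thesis using c ch_disj by blast
      qed
    qed
  qed
  then show ?thesis unfolding inj_on_def by blast
qed

primrec lvl :: "nat \<Rightarrow> 'a \<Rightarrow> nat" where
  "lvl 0 v = 1 + card {u\<in>V. height E u = 0 \<and> lab u < lab v}"
| "lvl (Suc h) v = (if height E v = Suc h then 1 + card {u\<in>V. height E u < Suc h}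
     + card {u\<in>V. height E u = Suc h \<and> Min (lvl h ` children E u) < Min (lvl h ` children E v)}
     else lvl h v)"

lemma lvl_stable: "height E v \<le> h \<Longrightarrow> lvl h v = lvl (height E v) v"
  by (induction h) (auto simp: le_Suc_eq)

definition lo0 :: "'a \<Rightarrow> nat" where
  "lo0 v = (if v \<in> V then lvl (height E v) v else 0)"

lemma lo0_RF: "isRF lo0"
  unfolding isRF_def
proof
  fix v assume v: "v \<in> V"
  show "lo0 v = 1 + card {u\<in>V. height E u < height E v}
      + card {u\<in>V. height E u = height E v \<and> key lo0 u < key lo0 v}"
  proof (cases "height E v")
    case 0
    have "{u\<in>V. height E u = height E v \<and> key lo0 u < key lo0 v} = {u\<in>V. height E u = 0 \<and> lab u < lab v}"
      using 0 unfolding key_def by auto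
    moreover have "lo0 v = lvl 0 v" using v 0 unfolding lo0_def by simp
    moreover have "{u\<in>V. height E u < height E v} = {}" using 0 by simp
    ultimately show ?thesis by (simp only: lvl.simps card.empty)
  next
    case (Suc h)
    have ch: "lvl h ` children E u = lo0 ` children E u" if "u \<in> V" "height E u = Suc h" for u
    proof (intro image_cong refl)
      fix c assume c: "c \<in> children E u"
      then have e: "(u, c) \<in> E" unfolding children_def by simp
      then have cV: "c \<in> V" using EV by auto
      have "height E c < Suc h" using height_child[OF e] that(2) by simp
      then have "lvl h c = lvl (height E c) c" by (intro lvl_stable) simp
      then show "lvl h c = lo0 c" unfolding lo0_def using cV by simp
    qed
    have eqk: "key lo0 u = Min (lvl h ` children E u)" if u: "u \<in> V" "height E u = Suc h" for u
      using ch[OF u] u(2) unfolding key_def by simp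
    have "{u\<in>V. height E u = Suc h \<and> Min (lvl h ` children E u) < Min (lvl h ` children E v)}
        = {u\<in>V. height E u = height E v \<and> key lo0 u < key lo0 v}"
      using eqk[OF v Suc] eqk Suc by auto
    moreover have "lo0 v = lvl (Suc h) v" using v Suc unfolding lo0_def by simp
    moreover have "lvl (Suc h) v = 1 + card {u\<in>V. height E u < Suc h}
     + card {u\<in>V. height E u = Suc h \<and> Min (lvl h ` children E u) < Min (lvl h ` children E v)}"
      using Suc by (simp only: lvl.simps if_True refl)
    ultimately show ?thesis using Suc by simp
  qed
qed

lemma lo0_bu: "is_bottom_up V E lab lo0"
  unfolding is_bottom_up_def
proof (intro conjI ballI allI impI)
  show "inj_on lo0 V" using rf_inj[OF lo0_RF] .
  show "lo0 ` V \<subseteq> {1..card V}" using rf_range[OF lo0_RF] by auto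
  show "v \<notin> V \<Longrightarrow> lo0 v = 0" for v unfolding lo0_def by simp
  show "lo0 v = lab v" if v: "v \<in> leaves V E" for v
  proof -
    have vV: "v \<in> V" using v unfolding leaves_def by simp
    then have h0: "height E v = 0" using height0_iff[OF vV] v by simp
    have "{u\<in>V. height E u = height E v \<and> key lo0 u < key lo0 v} = {u\<in>leaves V E. lab u < lab v}"
    proof (intro set_eqI iffI)
      fix x assume "x \<in> {u\<in>V. height E u = height E v \<and> key lo0 u < key lo0 v}"
      then have x: "x \<in> V" "height E x = 0" "key lo0 x < key lo0 v" using h0 by auto
      then have "x \<in> leaves V E" using height0_iff[OF x(1)] by simp
      moreover have "lab x < lab v" using x(2,3) h0 unfolding key_def by simp
      ultimately show "x \<in> {u\<in>leaves V E. lab u < lab v}" by simp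
    next
      fix x assume "x \<in> {u\<in>leaves V E. lab u < lab v}"
      then have x: "x \<in> leaves V E" "lab x < lab v" by auto
      then have xV: "x \<in> V" unfolding leaves_def by simp
      then have "height E x = 0" using height0_iff[OF xV] x(1) by simp
      then show "x \<in> {u\<in>V. height E u = height E v \<and> key lo0 u < key lo0 v}"
        using xV x(2) h0 unfolding key_def by simp
    qed
    moreover have "lo0 v = 1 + card {u\<in>V. height E u < height E v}
      + card {u\<in>V. height E u = height E v \<and> key lo0 u < key lo0 v}"
      using lo0_RF vV unfolding isRF_def by blast
    moreover have "{u\<in>V. height E u < height E v} = {}" using h0 by simp
    ultimately have "lo0 v = 1 + card {u\<in>leaves V E. lab u < lab v}"
      by (simp only: card.empty add_0_right)
    then show ?thesis using rank_lemma[OF labbij v] by simp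
  qed
  show "lo0 u < lo0 v" if "u \<in> V" "v \<in> V" "height E u < height E v" for u v
    using rf_mono1[OF lo0_RF] that by blast
  show "lo0 u < lo0 v" if "u \<in> V" "v \<in> V"
    "0 < height E u \<and> height E u = height E v \<and> Min (lo0 ` children E u) < Min (lo0 ` children E v)" for u v
  proof -
    have "key lo0 u < key lo0 v" using that unfolding key_def by simp
    then show ?thesis using rf_mono2[OF lo0_RF, of u v] that by simp
  qed
qed

lemma bu_RF:
  assumes bu: "is_bottom_up V E lab lo"
  shows "isRF lo"
  unfolding isRF_def
proof
  fix v assume v: "v \<in> V"
  have inj: "inj_on lo V" and sub: "lo ` V \<subseteq> {1..card V}"
    and lf: "\<forall>v\<in>leaves V E. lo v = lab v"
    and b: "\<And>u v. u \<in> V \<Longrightarrow> v \<in> V \<Longrightarrow> height E u < height E v \<Longrightarrow> lo u < lo v"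
    and c: "\<And>u v. u \<in> V \<Longrightarrow> v \<in> V \<Longrightarrow> 0 < height E u \<Longrightarrow> height E u = height E v \<Longrightarrow>
        Min (lo ` children E u) < Min (lo ` children E v) \<Longrightarrow> lo u < lo v"
    using bu unfolding is_bottom_up_def by blast+
  have "lo ` V = {1..card V}"
    using sub inj by (intro card_subset_eq) (auto simp: card_image)
  then have bij: "bij_betw lo V {1..card V}" using inj by (auto simp: bij_betw_def)
  let ?A = "{u\<in>V. height E u < height E v}"
  let ?B = "{u\<in>V. height E u = height E v \<and> key lo u < key lo v}"
  have eq: "{u\<in>V. lo u < lo v} = ?A \<union> ?B"
  proof (intro set_eqI iffI)
    fix u assume "u \<in> {u\<in>V. lo u < lo v}"
    then have u: "u \<in> V" and l: "lo u < lo v" by auto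
    have "\<not> height E v < height E u" using b[OF v u] l by fastforce
    moreover have "key lo u < key lo v" if h: "height E u = height E v"
    proof (cases "height E v = 0")
      case True
      then have "u \<in> leaves V E" "v \<in> leaves V E" using height0_iff[OF u] height0_iff[OF v] h by auto
      then show ?thesis using l lf True h unfolding key_def by auto
    next
      case False
      have "key lo u \<noteq> key lo v" using key_inj[OF inj u v h] l by auto
      moreover have "\<not> key lo v < key lo u"
        using c[OF v u] False h l unfolding key_def by fastforce
      ultimately show ?thesis by linarith
    qed
    ultimately show "u \<in> ?A \<union> ?B" using u by (auto simp: nat_neq_iff)
  next
    fix u assume "u \<in> ?A \<union> ?B"
    then show "u \<in> {u\<in>V. lo u < lo v}"
    proof
      assume "u \<in> ?A" then show ?thesis using b v by auto
    next
      assume u: "u \<in> ?B"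
      show ?thesis
      proof (cases "height E v = 0")
        case True
        have uV: "u \<in> V" and hu: "height E u = height E v" using u by auto
        then have "u \<in> leaves V E" "v \<in> leaves V E" using height0_iff[OF uV] height0_iff[OF v] True by auto
        then show ?thesis using u lf True unfolding key_def by auto
      next
        case False
        then show ?thesis using u c[OF _ v] unfolding key_def by auto
      qed
    qed
  qed
  have "card (?A \<union> ?B) = card ?A + card ?B" using finV by (intro card_Un_disjoint) auto
  then show "lo v = 1 + card ?A + card ?B" using rank_lemma[OF bij v] eq by simp
qed

lemma rf_unique:
  assumes f1: "isRF f1" and f2: "isRF f2"
  shows "v \<in> V \<Longrightarrow> f1 v = f2 v"
proof -
  have "\<forall>v. v \<in> V \<longrightarrow> height E v = h \<longrightarrow> f1 v = f2 v" for h
  proof (induction h rule: less_induct)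
    case (less h)
    show ?case
    proof (intro allI impI)
      fix v assume v: "v \<in> V" and hv: "height E v = h"
      have k: "key f1 u = key f2 u" if u: "u \<in> V" "height E u = h" for u
      proof (cases "h = 0")
        case True then show ?thesis using u unfolding key_def by simp
      next
        case False
        have "f1 ` children E u = f2 ` children E u"
        proof (intro image_cong refl)
          fix c assume c: "c \<in> children E u"
          then have "c \<in> V" "height E c < h" using ch_sub height_child u unfolding children_def by auto
          then show "f1 c = f2 c" using less.IH by blast
        qed
        then show ?thesis unfolding key_def by simp
      qed
      have "{u\<in>V. height E u = height E v \<and> key f1 u < key f1 v} = {u\<in>V. height E u = height E v \<and> key f2 u < key f2 v}"
        using k v hv by auto
      moreover have "f1 v = 1 + card {u\<in>V. height E u < height E v}
      + card {u\<in>V. height E u = height E v \<and> key f1 u < key f1 v}"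
        using f1 v unfolding isRF_def by blast
      moreover have "f2 v = 1 + card {u\<in>V. height E u < height E v}
      + card {u\<in>V. height E u = height E v \<and> key f2 u < key f2 v}"
        using f2 v unfolding isRF_def by blast
      ultimately show "f1 v = f2 v" by simp
    qed
  qed
  then show "v \<in> V \<Longrightarrow> f1 v = f2 v" by blast
qed

lemma bottom_up_eq: "bottom_up V E lab = lo0"
  unfolding bottom_up_def
proof (rule the_equality)
  show "is_bottom_up V E lab lo0" by (rule lo0_bu)
  fix lo assume bu: "is_bottom_up V E lab lo"
  show "lo = lo0"
  proof
    fix v show "lo v = lo0 v"
    proof (cases "v \<in> V")
      case True then show ?thesis using rf_unique[OF bu_RF[OF bu] lo0_RF] by blast
    next
      case False
      have "\<forall>v. v \<notin> V \<longrightarrow> lo v = 0" using bu unfolding is_bottom_up_def by blast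
      then show ?thesis using False unfolding lo0_def by simp
    qed
  qed
qed

end


lemma cycle_swapidseq: "distinct l \<Longrightarrow> swapidseq (length l - 1) (cycle_of_list l)"
proof (induction l rule: cycle_of_list.induct)
  case (1 i j cs)
  then have "swapidseq (length cs) (cycle_of_list (j # cs))" "i \<noteq> j" by auto
  then have "swapidseq (Suc (length cs)) (transpose i j \<circ> cycle_of_list (j # cs))"
    by (rule swapidseq.comp_Suc)
  then show ?case by (subst cycle_of_list.simps) (simp only: length_Cons diff_Suc_1)
qed simp_all

lemma kappa_swapidseq: "finite S \<Longrightarrow> swapidseq (card S - 1) (kappa S)"
  unfolding kappa_def using cycle_swapidseq[of "sorted_list_of_set S"] by simp

lemma kappa_permutes: "finite S \<Longrightarrow> kappa S permutes S"
  unfolding kappa_def using cycle_permutes[of "sorted_list_of_set S"] by simp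

lemma foldr_step: "foldr (\<lambda>k f. P k \<circ> f) (k # ks) id = P k \<circ> foldr (\<lambda>k f. P k \<circ> f) ks id"
  by simp

lemma foldr_nil: "foldr (\<lambda>k f. P k \<circ> f) [] id = id"
  unfolding foldr_Nil by (rule id_apply)

lemma foldr_nil2: "foldr (\<lambda>(a, b) f. transpose a b \<circ> f) [] id = id"
  unfolding foldr_Nil by (rule id_apply)

lemma foldr_step2: "foldr (\<lambda>(a, b) f. transpose a b \<circ> f) ((a, b) # ts) id
   = transpose a b \<circ> foldr (\<lambda>(a, b) f. transpose a b \<circ> f) ts id"
  by simp

lemma foldr_swapidseq:
  "(\<forall>k\<in>set ks. swapidseq (c k) (P k)) \<Longrightarrow> swapidseq (sum_list (map c ks)) (foldr (\<lambda>k f. P k \<circ> f) ks id)"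
proof (induction ks)
  case Nil then show ?case by (simp only: foldr_nil list.map sum_list.Nil) (rule swapidseq.id)
next
  case (Cons k ks)
  have "swapidseq (sum_list (map c ks)) (foldr (\<lambda>k f. P k \<circ> f) ks id)"
    by (rule Cons.IH) (use Cons.prems in simp)
  moreover have "swapidseq (c k) (P k)" using Cons.prems by simp
  ultimately have "swapidseq (c k + sum_list (map c ks)) (P k \<circ> foldr (\<lambda>k f. P k \<circ> f) ks id)"
    by (intro swapidseq_comp_add)
  then show ?case by (simp only: foldr_step list.map sum_list.Cons)
qed

lemma foldr_permutes:
  "(\<forall>k\<in>set ks. P k permutes S) \<Longrightarrow> foldr (\<lambda>k f. P k \<circ> f) ks id permutes S"
proof (induction ks)
  case Nil then show ?case by (simp only: foldr_nil) (rule permutes_id)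
next
  case (Cons k ks)
  have "foldr (\<lambda>k f. P k \<circ> f) ks id permutes S"
    by (rule Cons.IH) (use Cons.prems in simp)
  moreover have "P k permutes S" using Cons.prems by simp
  ultimately have "P k \<circ> foldr (\<lambda>k f. P k \<circ> f) ks id permutes S"
    by (rule permutes_compose)
  then show ?case by (simp only: foldr_step)
qed

lemma trans_foldr_swapidseq:
  "(\<forall>(a, b)\<in>set ts. a \<noteq> b) \<Longrightarrow> swapidseq (length ts) (foldr (\<lambda>(a, b) f. transpose a b \<circ> f) ts id)"
proof (induction ts)
  case Nil then show ?case by (simp only: foldr_nil2 list.size) (rule swapidseq.id)
next
  case (Cons t ts)
  obtain a b where t: "t = (a, b)" by (cases t)
  have "swapidseq (length ts) (foldr (\<lambda>(a, b) f. transpose a b \<circ> f) ts id)"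
    by (rule Cons.IH) (use Cons.prems in simp)
  moreover have "a \<noteq> b" using Cons.prems t by simp
  ultimately have "swapidseq (length ts) (foldr (\<lambda>(a, b) f. transpose a b \<circ> f) ts id)" "a \<noteq> b" by auto
  then have "swapidseq (Suc (length ts)) (transpose a b \<circ> foldr (\<lambda>(a, b) f. transpose a b \<circ> f) ts id)"
    by (rule swapidseq.comp_Suc)
  then show ?case using t by (simp only: foldr_step2 length_Cons)
qed

lemma perm_decomp:
  assumes "finite S" "p permutes S"
  shows "\<exists>ts. length ts \<le> card S - 1 \<and> (\<forall>(a, b)\<in>set ts. a \<noteq> b \<and> a \<in> S \<and> b \<in> S)
           \<and> foldr (\<lambda>(a, b) f. transpose a b \<circ> f) ts id = p"
  using assms
proof (induction S arbitrary: p rule: finite_induct)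
  case empty
  then have "p = id" by simp
  then show ?case by (intro exI[of _ "[]"]) simp
next
  case (insert a F)
  let ?q = "transpose a (p a) \<circ> p"
  have q: "?q permutes F" using permutes_insert_lemma[OF insert.prems] .
  obtain ts where ts: "length ts \<le> card F - 1" "\<forall>(x, y)\<in>set ts. x \<noteq> y \<and> x \<in> F \<and> y \<in> F"
    "foldr (\<lambda>(a, b) f. transpose a b \<circ> f) ts id = ?q"
    using insert.IH[OF q] by blast
  have cI: "card (insert a F) = Suc (card F)" using insert by simp
  show ?case
  proof (cases "p a = a")
    case True
    then have "?q = p" by simp
    then have "foldr (\<lambda>(a, b) f. transpose a b \<circ> f) ts id = p" using ts(3) by (simp only:)
    moreover have "length ts \<le> card (insert a F) - 1" using ts(1) cI by simp
    moreover have "\<forall>(x, y)\<in>set ts. x \<noteq> y \<and> x \<in> insert a F \<and> y \<in> insert a F"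
      using ts(2) by auto
    ultimately show ?thesis by blast
  next
    case False
    have "p a \<in> insert a F" using permutes_in_image[OF insert.prems] by simp
    with False have paF: "p a \<in> F" by simp
    then have "card F \<ge> 1" using insert.hyps(1) by (metis One_nat_def Suc_leI card_gt_0_iff empty_iff)
    have "foldr (\<lambda>(a, b) f. transpose a b \<circ> f) ((a, p a) # ts) id
        = transpose a (p a) \<circ> foldr (\<lambda>(a, b) f. transpose a b \<circ> f) ts id"
      by (rule foldr_step2)
    also have "\<dots> = transpose a (p a) \<circ> ?q" by (simp only: ts(3))
    also have "\<dots> = p" by (rule ext) simp
    finally have "foldr (\<lambda>(a, b) f. transpose a b \<circ> f) ((a, p a) # ts) id = p" .
    moreover have "length ((a, p a) # ts) \<le> card (insert a F) - 1" using ts(1) cI \<open>card F \<ge> 1\<close> by simp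
    moreover have "\<forall>(x, y)\<in>set ((a, p a) # ts). x \<noteq> y \<and> x \<in> insert a F \<and> y \<in> insert a F"
      using ts(2) False paF by auto
    ultimately show ?thesis by blast
  qed
qed

context ptree
begin

lemma lo0_child_range:
  assumes c: "c \<in> children E u"
  shows "lo0 c \<in> {1..2 * n - 2}"
proof -
  have cV: "c \<in> V" and cr: "c \<noteq> root" using c ch_sub by auto
  have "lo0 c < lo0 root" using rf_mono1[OF lo0_RF cV root_props(1) height_root[OF cV cr]] .
  moreover have "lo0 root \<le> card V" "1 \<le> lo0 c" using rf_range[OF lo0_RF] root_props(1) cV by auto
  ultimately show ?thesis using card_V_bound by auto
qed

lemma match_perm_props:
  shows "swapidseq (n - 1) (match_perm V E lab)" and "match_perm V E lab permutes {1..2 * n - 2}"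
proof -
  let ?I = "V - leaves V E"
  let ?ks = "sorted_list_of_set (lo0 ` ?I)"
  let ?P = "\<lambda>k. kappa (lo0 ` children E (inv_into V lo0 k))"
  let ?c = "\<lambda>k. card (children E (inv_into V lo0 k)) - 1"
  have inj: "inj_on lo0 V" using rf_inj[OF lo0_RF] .
  have mp: "match_perm V E lab = foldr (\<lambda>k f. ?P k \<circ> f) ?ks id"
    unfolding match_perm_def bottom_up_eq Let_def ..
  have fin: "finite (lo0 ` ?I)" using finV by simp
  have setks: "set ?ks = lo0 ` ?I" using fin by simp
  have inv: "inv_into V lo0 (lo0 u) = u" if "u \<in> ?I" for u
    using inv_into_f_f[OF inj] that by simp
  have "\<forall>k\<in>set ?ks. swapidseq (?c k) (?P k)"
  proof
    fix k assume "k \<in> set ?ks"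
    then obtain u where u: "u \<in> ?I" "k = lo0 u" using setks by auto
    have "card (lo0 ` children E u) = card (children E u)"
      using inj ch_sub by (intro card_image) (auto intro: inj_on_subset)
    then show "swapidseq (?c k) (?P k)" using kappa_swapidseq[of "lo0 ` children E u"] ch_fin u inv by simp
  qed
  then have "swapidseq (sum_list (map ?c ?ks)) (match_perm V E lab)"
    unfolding mp by (rule foldr_swapidseq)
  moreover have "sum_list (map ?c ?ks) = n - 1"
  proof -
    have "sum_list (map ?c ?ks) = sum ?c (lo0 ` ?I)"
      using sum_list_distinct_conv_sum_set[of ?ks ?c] setks by simp
    also have "\<dots> = sum (?c \<circ> lo0) ?I"
      using inj by (intro sum.reindex) (auto intro: inj_on_subset)
    also have "\<dots> = (\<Sum>u\<in>?I. card (children E u) - 1)"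
      using inv by (intro sum.cong) auto
    finally show ?thesis using sum_I by simp
  qed
  ultimately show "swapidseq (n - 1) (match_perm V E lab)" by simp
  have "\<forall>k\<in>set ?ks. ?P k permutes {1..2 * n - 2}"
  proof
    fix k assume "k \<in> set ?ks"
    then obtain u where u: "u \<in> ?I" "k = lo0 u" using setks by auto
    have "?P k permutes lo0 ` children E u" using kappa_permutes ch_fin u inv by simp
    moreover have "lo0 ` children E u \<subseteq> {1..2 * n - 2}" using lo0_child_range by auto
    ultimately show "?P k permutes {1..2 * n - 2}" by (rule permutes_subset)
  qed
  then show "match_perm V E lab permutes {1..2 * n - 2}"
    unfolding mp by (rule foldr_permutes)
qed

end

theorem proposition2:
  fixes n :: nat and V1 :: "'a set" and E1 :: "('a \<times> 'a) set" and lab1 :: "'a \<Rightarrow> nat"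
    and V2 :: "'b set" and E2 :: "('b \<times> 'b) set" and lab2 :: "'b \<Rightarrow> nat"
  assumes "n \<ge> 2"
    and "phylo_tree n V1 E1 lab1"
    and "phylo_tree n V2 E2 lab2"
  shows "even (TD' n (V1, E1, lab1) (V2, E2, lab2)) \<and> TD' n (V1, E1, lab1) (V2, E2, lab2) < 2 * n - 2"
proof -
  interpret T1: ptree n V1 E1 lab1 by unfold_locales (rule assms(2))
  interpret T2: ptree n V2 E2 lab2 by unfold_locales (rule assms(3))
  let ?S = "{1..2 * n - 2}"
  define p1 where "p1 = match_perm V1 E1 lab1"
  define p2 where "p2 = match_perm V2 E2 lab2"
  define p where "p = inv p2 \<circ> p1"
  have s1: "swapidseq (n - 1) p1" and ps1: "p1 permutes ?S"
    unfolding p1_def using T1.match_perm_props by auto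
  have s2: "swapidseq (n - 1) p2" and ps2: "p2 permutes ?S"
    unfolding p2_def using T2.match_perm_props by auto
  have pS: "p permutes ?S" unfolding p_def using permutes_compose[OF ps1 permutes_inv[OF ps2]] .
  have perm1: "permutation p1" using s1 unfolding permutation_def by blast
  have perm2: "permutation p2" using s2 unfolding permutation_def by blast
  have "evenperm p = (evenperm (inv p2) = evenperm p1)"
    unfolding p_def using evenperm_comp[OF permutation_inverse[OF perm2] perm1] .
  also have "\<dots> = (evenperm p2 = evenperm p1)" using evenperm_inv[OF perm2] by simp
  finally have ev: "evenperm p"
    using evenperm_unique[OF s1 refl] evenperm_unique[OF s2 refl] by simp
  define P where "P k = (\<exists>ts :: (nat \<times> nat) list. length ts = k \<and>
      (\<forall>(a, b) \<in> set ts. a \<noteq> b \<and> a \<in> {1..2*n-2} \<and> b \<in> {1..2*n-2}) \<and>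
      foldr (\<lambda>(a, b) f. transpose a b \<circ> f) ts id = p)" for k
  have td: "TD' n (V1, E1, lab1) (V2, E2, lab2) = (LEAST k. P k)"
    unfolding TD'_def trans_dist_def P_def p_def p1_def p2_def by simp
  obtain ts0 where ts0: "length ts0 \<le> card ?S - 1" "\<forall>(a, b)\<in>set ts0. a \<noteq> b \<and> a \<in> ?S \<and> b \<in> ?S"
    "foldr (\<lambda>(a, b) f. transpose a b \<circ> f) ts0 id = p"
    using perm_decomp[OF _ pS] by auto
  have P0: "P (length ts0)" unfolding P_def using ts0 by blast
  have "(LEAST k. P k) \<le> length ts0" using P0 by (rule Least_le)
  also have "\<dots> < 2 * n - 2" using ts0(1) assms(1) by simp
  finally have lt: "(LEAST k. P k) < 2 * n - 2" .
  have "P (LEAST k. P k)" using P0 by (rule LeastI)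
  then obtain ts where ts: "length ts = (LEAST k. P k)"
    "\<forall>(a, b) \<in> set ts. a \<noteq> b \<and> a \<in> {1..2*n-2} \<and> b \<in> {1..2*n-2}"
    "foldr (\<lambda>(a, b) f. transpose a b \<circ> f) ts id = p" unfolding P_def by blast
  have "\<forall>(a, b)\<in>set ts. a \<noteq> b" using ts(2) by auto
  from trans_foldr_swapidseq[OF this] have "swapidseq (length ts) (foldr (\<lambda>(a, b) f. transpose a b \<circ> f) ts id)" .
  then have "swapidseq (length ts) p" using ts(3) by (simp only:)
  from evenperm_unique[OF this refl] ev have "even (length ts)" by simp
  then show ?thesis using td lt ts(1) by simp
qed

end
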